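(* Let $(J,F,Y)$ be a pullback triple and let $Y_0\subset Y$ be a restriction of $Y$. Then $(J,F,Y_0)$ is a pullback triple if and only if $\mathcal D(Y_0)$ is a core of $Y$. In this case $(J,F,Y)$ and $(J,F,Y_0)$ are equivalent.
   Context: For Hilbert spaces $\mathcal H,\mathcal X,\mathcal E$, a pullback triple $(J,F,Y)$ consists of $J:\mathcal X\to\mathcal H$, $F:\mathcal X\to\mathcal E$ bounded with dense range, $Y:\mathcal H\to\mathcal X$ a completion operator (densely defined injective linear map with dense range), with $\|u\|_{\mathcal X}^2=\|Ju\|^2+\|Fu\|_{\mathcal E}^2$ for all $u\in\mathcal X$ and $JYf=f$ for $f\in\mathcal D(Y)$. A subspace $\mathcal D_0\subset\mathcal D(Y)$ is a core of $Y$ if for every $f\in\mathcal D(Y)$ there are $f_j\in\mathcal D_0$ with $f_j\to f$ and $Yf_j\to Yf$. Two pullback triples $(J_j,F_j,Y_j)$ with spaces $\mathcal H_j,\mathcal X_j,\mathcal E_j$ are equivalent if there are unitaries $W_{\mathcal H},W_{\mathcal X},W_{\mathcal E}$ with $W_{\mathcal H}J_1=J_2W_{\mathcal X}$ and $W_{\mathcal E}F_1=F_2W_{\mathcal X}$. *)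

theory Defs
  imports "HOL-Analysis.Analysis"
begin

text \<open>A (possibly unbounded) operator from 'h to 'x is modelled as a pair of a domain
  D :: 'h set and a function Y :: 'h => 'x (values outside D are irrelevant).\<close>

definition dense_range :: "('a::topological_space \<Rightarrow> 'b::topological_space) \<Rightarrow> bool" where
  "dense_range T \<longleftrightarrow> closure (range T) = UNIV"

definition linear_operator_on :: "'a::real_vector set \<Rightarrow> ('a \<Rightarrow> 'b::real_vector) \<Rightarrow> bool" where
  "linear_operator_on D Y \<longleftrightarrow> subspace D \<and>
     (\<forall>f\<in>D. \<forall>g\<in>D. Y (f + g) = Y f + Y g) \<and>
     (\<forall>c. \<forall>f\<in>D. Y (c *\<^sub>R f) = c *\<^sub>R Y f)"

definition completion_operator ::
  "'h::real_normed_vector set \<Rightarrow> ('h \<Rightarrow> 'x::real_normed_vector) \<Rightarrow> bool" where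
  "completion_operator D Y \<longleftrightarrow> linear_operator_on D Y \<and> closure D = UNIV \<and>
     inj_on Y D \<and> closure (Y ` D) = UNIV"

definition pullback_triple ::
  "('x::{real_inner,complete_space} \<Rightarrow> 'h::{real_inner,complete_space}) \<Rightarrow>
   ('x \<Rightarrow> 'e::{real_inner,complete_space}) \<Rightarrow> 'h set \<Rightarrow> ('h \<Rightarrow> 'x) \<Rightarrow> bool" where
  "pullback_triple J F D Y \<longleftrightarrow>
     bounded_linear J \<and> dense_range J \<and>
     bounded_linear F \<and> dense_range F \<and>
     completion_operator D Y \<and>
     (\<forall>u. (norm u)\<^sup>2 = (norm (J u))\<^sup>2 + (norm (F u))\<^sup>2) \<and>
     (\<forall>f\<in>D. J (Y f) = f)"

definition is_restriction :: "'h::real_vector set \<Rightarrow> ('h \<Rightarrow> 'x) \<Rightarrow> 'h set \<Rightarrow> ('h \<Rightarrow> 'x) \<Rightarrow> bool" where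
  "is_restriction D0 Y0 D Y \<longleftrightarrow> subspace D0 \<and> D0 \<subseteq> D \<and> (\<forall>f\<in>D0. Y0 f = Y f)"

definition is_core :: "'h::topological_space set \<Rightarrow> 'h set \<Rightarrow> ('h \<Rightarrow> 'x::topological_space) \<Rightarrow> bool" where
  "is_core D0 D Y \<longleftrightarrow> D0 \<subseteq> D \<and>
     (\<forall>f\<in>D. \<exists>s::nat \<Rightarrow> 'h. (\<forall>j. s j \<in> D0) \<and> s \<longlonglongrightarrow> f \<and> (\<lambda>j. Y (s j)) \<longlonglongrightarrow> Y f)"

definition unitary_op :: "('a::real_normed_vector \<Rightarrow> 'b::real_normed_vector) \<Rightarrow> bool" where
  "unitary_op W \<longleftrightarrow> linear W \<and> surj W \<and> (\<forall>x. norm (W x) = norm x)"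

text \<open>Equivalence of pullback triples (the definition does not involve the completion operators).\<close>
definition pullback_equivalent ::
  "('x1::real_normed_vector \<Rightarrow> 'h1::real_normed_vector) \<Rightarrow> ('x1 \<Rightarrow> 'e1::real_normed_vector) \<Rightarrow> 'h1 set \<Rightarrow> ('h1 \<Rightarrow> 'x1) \<Rightarrow>
   ('x2::real_normed_vector \<Rightarrow> 'h2::real_normed_vector) \<Rightarrow> ('x2 \<Rightarrow> 'e2::real_normed_vector) \<Rightarrow> 'h2 set \<Rightarrow> ('h2 \<Rightarrow> 'x2) \<Rightarrow> bool" where
  "pullback_equivalent J1 F1 D1 Y1 J2 F2 D2 Y2 \<longleftrightarrow>
     (\<exists>(WH::'h1 \<Rightarrow> 'h2) (WX::'x1 \<Rightarrow> 'x2) (WE::'e1 \<Rightarrow> 'e2).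
        unitary_op WH \<and> unitary_op WX \<and> unitary_op WE \<and>
        WH \<circ> J1 = J2 \<circ> WX \<and> WE \<circ> F1 = F2 \<circ> WX)"

end

theory Submission
  imports Defs
begin

lemma unitary_id: "unitary_op (id :: 'a::real_normed_vector \<Rightarrow> 'a)"
  unfolding unitary_op_def by (auto simp: linear_id)

theorem mainTheorem5:
  fixes J :: "'x::{real_inner,complete_space} \<Rightarrow> 'h::{real_inner,complete_space}"
    and F :: "'x \<Rightarrow> 'e::{real_inner,complete_space}"
    and D D0 :: "'h set" and Y Y0 :: "'h \<Rightarrow> 'x"
  assumes "pullback_triple J F D Y"
    and "is_restriction D0 Y0 D Y"
  shows "(pullback_triple J F D0 Y0 \<longleftrightarrow> is_core D0 D Y) \<and>
         (pullback_triple J F D0 Y0 \<longrightarrow> pullback_equivalent J F D Y J F D0 Y0)"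
proof -
  note P = assms(1)[unfolded pullback_triple_def completion_operator_def linear_operator_on_def dense_range_def]
  note R = assms(2)[unfolded is_restriction_def]
  have bl: "bounded_linear J" using P by blast
  have JY: "\<And>f. f \<in> D \<Longrightarrow> J (Y f) = f" using P by blast
  have img: "Y0 ` D0 = Y ` D0" using R by (auto simp: image_def)
  have JYimg: "J ` (Y ` D0) = D0" using R JY by (force simp: image_def)
  have dense_D0: "closure D0 = UNIV" if cl: "closure (Y ` D0) = UNIV"
  proof -
    have c: "continuous_on UNIV J" using bl linear_continuous_on by blast
    have "J ` closure (Y ` D0) \<subseteq> closure (J ` (Y ` D0))"
      by (rule image_closure_subset[OF _ closed_closure]) (auto intro: continuous_on_subset[OF c] closure_subset[THEN subsetD])
    hence "range J \<subseteq> closure D0" using cl JYimg by simp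
    hence "closure (range J) \<subseteq> closure D0" by (metis closure_minimal closed_closure)
    thus ?thesis using P by auto
  qed
  have lin0: "linear_operator_on D0 Y0"
    unfolding linear_operator_on_def
  proof (intro conjI ballI allI)
    show "subspace D0" using R by blast
    fix f g assume "f \<in> D0" "g \<in> D0"
    thus "Y0 (f + g) = Y0 f + Y0 g" using R P subspace_add[of D0 f g] by (auto simp: subset_iff)
  next
    fix c f assume "f \<in> D0"
    thus "Y0 (c *\<^sub>R f) = c *\<^sub>R Y0 f" using R P subspace_scale[of D0 f c] by (auto simp: subset_iff)
  qed
  have inj0: "inj_on Y0 D0"
  proof -
    have "inj_on Y D0" using P R inj_on_subset by blast
    thus ?thesis using R by (auto simp: inj_on_def)
  qed
  have JY0: "\<forall>f\<in>D0. J (Y0 f) = f" using R JY by auto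
  have equiv: "pullback_triple J F D0 Y0 \<longleftrightarrow> closure (Y ` D0) = UNIV"
    using P lin0 inj0 JY0 dense_D0 img
    unfolding pullback_triple_def completion_operator_def dense_range_def by auto
  have core: "is_core D0 D Y \<longleftrightarrow> closure (Y ` D0) = UNIV"
  proof
    assume c: "is_core D0 D Y"
    have "Y ` D \<subseteq> closure (Y ` D0)"
    proof
      fix y assume "y \<in> Y ` D"
      then obtain f where f: "f \<in> D" "y = Y f" by blast
      then obtain s where s: "\<forall>j. s j \<in> D0" "(\<lambda>j. Y (s j)) \<longlonglongrightarrow> Y f"
        using c unfolding is_core_def by blast
      show "y \<in> closure (Y ` D0)" unfolding closure_sequential
        using s f by (intro exI[of _ "\<lambda>j. Y (s j)"]) auto
    qed
    hence "closure (Y ` D) \<subseteq> closure (Y ` D0)" by (metis closure_minimal closed_closure)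
    thus "closure (Y ` D0) = UNIV" using P by auto
  next
    assume cl: "closure (Y ` D0) = UNIV"
    show "is_core D0 D Y" unfolding is_core_def
    proof (intro conjI ballI)
      show "D0 \<subseteq> D" using R by blast
      fix f assume f: "f \<in> D"
      have "Y f \<in> closure (Y ` D0)" using cl by simp
      then obtain x where x: "\<forall>n. x n \<in> Y ` D0" "x \<longlonglongrightarrow> Y f"
        unfolding closure_sequential by blast
      have "\<forall>n. \<exists>t. t \<in> D0 \<and> x n = Y t" using x(1) by blast
      then obtain s where s: "\<And>n. s n \<in> D0 \<and> x n = Y (s n)" by metis
      have "(\<lambda>j. J (x j)) \<longlonglongrightarrow> J (Y f)"
        using x(2) bounded_linear.tendsto[OF bl] by blast
      moreover have "\<And>j. J (x j) = s j" using s R JY by auto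
      ultimately have "s \<longlonglongrightarrow> f" using JY[OF f] by simp
      moreover have "(\<lambda>j. Y (s j)) \<longlonglongrightarrow> Y f" using x(2) s by (metis (no_types, lifting) ext)
      ultimately show "\<exists>s. (\<forall>j. s j \<in> D0) \<and> s \<longlonglongrightarrow> f \<and> (\<lambda>j. Y (s j)) \<longlonglongrightarrow> Y f"
        using s by blast
    qed
  qed
  have "pullback_equivalent J F D Y J F D0 Y0"
    unfolding pullback_equivalent_def
    by (rule exI[of _ id], rule exI[of _ id], rule exI[of _ id]) (simp add: unitary_id)
  thus ?thesis using equiv core by blast
qed

end
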